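(* Let $(M,g,S)$, $p$, $u$ and the coordinates $(x',y',z',t')$ be as in the context. Then $u$, $Su$, $S^2u$, $S^3u$ are isotropic vectors with respect to $\tilde g$, and their endpoints lie on the surface in $T_pM$ given by $$x'^2+y'^2=\tfrac12,\qquad z'^2+t'^2=\tfrac12.$$
   Context: $M$ is a 4-dimensional differentiable manifold with a positive definite metric $g$ and a tensor field $S$ of type $(1,1)$ whose components in some local coordinate system form the matrix with rows $(0,1,0,0)$, $(0,0,1,0)$, $(0,0,0,1)$, $(-1,0,0,0)$; hence $S^4=-\mathrm{id}$, and $g(Su,Sv)=g(u,v)$ for all vector fields $u,v$. The associated metric is $\tilde g(u,v)=g(u,Sv)+g(Su,v)$; a nonzero vector $w$ is isotropic if $\tilde g(w,w)=0$. Let $p\in M$ and $u\in T_pM$ with $\{u,Su,S^2u,S^3u\}$ a $g$-orthonormal basis of $T_pM$. Coordinates $(x,y,z,t)$ on $T_pM$ are given by $v=xu+ySu+zS^2u+tS^3u$, and coordinates $(x',y',z',t')$ by $x=\frac12(x'-y'+z'-t')$, $y=\frac{\sqrt2}{2}(-y'+t')$, $z=-\frac12(x'+y'+z'+t')$, $t=\frac{\sqrt2}{2}(-x'+z')$. The endpoint of a vector $w\in T_pM$ is the point $w$ of $T_pM$. *)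

theory Defs
  imports "HOL-Analysis.Analysis"
begin

text \<open>The tangent space T_pM is identified with real^4 via the coordinate basis of
the local coordinate system; in that basis the (1,1)-tensor S has the given matrix
(rows (0,1,0,0), (0,0,1,0), (0,0,0,1), (-1,0,0,0)).\<close>

definition S_mat :: "real^4^4" where
  "S_mat = vector [vector [0,1,0,0], vector [0,0,1,0], vector [0,0,0,1], vector [-1,0,0,0]]"

definition S_op :: "real^4 \<Rightarrow> real^4" where
  "S_op v = S_mat *v v"

definition gtilde :: "(real^4 \<Rightarrow> real^4 \<Rightarrow> real) \<Rightarrow> real^4 \<Rightarrow> real^4 \<Rightarrow> real" where
  "gtilde g u v = g u (S_op v) + g (S_op u) v"

definition isotropic :: "(real^4 \<Rightarrow> real^4 \<Rightarrow> real) \<Rightarrow> real^4 \<Rightarrow> bool" where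
  "isotropic g w \<longleftrightarrow> w \<noteq> 0 \<and> gtilde g w w = 0"

end

theory Submission
  imports Defs
begin

lemma alg_part:
  fixes x y z t x' y' z' t' :: real
  assumes n: "x^2+y^2+z^2+t^2 = 1" and c1: "t*(x-z) = 0" and c2: "y*(x+z) = 0"
    and e1: "x = (x' - y' + z' - t') / 2"
    and e2: "y = sqrt 2 / 2 * (- y' + t')"
    and e3: "z = - (x' + y' + z' + t') / 2"
    and e4: "t = sqrt 2 / 2 * (- x' + z')"
  shows "x'\<^sup>2 + y'\<^sup>2 = 1/2 \<and> z'\<^sup>2 + t'\<^sup>2 = 1/2"
proof -
  define q where "q = sqrt (2::real)"
  have s2: "q*q = 2" unfolding q_def by simp
  have qn: "q \<noteq> 0" unfolding q_def by simp
  have "q*(q*y) = (q*q)*y" by (simp add: mult.assoc)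
  also have "\<dots> = q*(t' - y')" using e2 s2 unfolding q_def[symmetric] by (simp add: algebra_simps)
  finally have "q*(q*y) = q*(t' - y')" .
  then have e2': "q*y = t' - y'" using qn by simp
  have "q*(q*t) = (q*q)*t" by (simp add: mult.assoc)
  also have "\<dots> = q*(z' - x')" using e4 s2 unfolding q_def[symmetric] by (simp add: algebra_simps)
  finally have "q*(q*t) = q*(z' - x')" .
  then have e4': "q*t = z' - x'" using qn by simp
  have X: "x' = (x - z - q*t)/2" using e1 e3 e4' by (simp add: field_simps)
  have Z: "z' = (x - z + q*t)/2" using e1 e3 e4' by (simp add: field_simps)
  have Y: "y' = (-x - z - q*y)/2" using e1 e3 e2' by (simp add: field_simps)
  have T: "t' = (-x - z + q*y)/2" using e1 e3 e2' by (simp add: field_simps)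
  have a: "x'\<^sup>2 + y'\<^sup>2 = (2*x^2+2*z^2+(q*q)*t^2+(q*q)*y^2 - 2*q*(t*(x-z)) + 2*q*(y*(x+z)))/4"
    unfolding X Y by (simp add: power2_eq_square field_simps)
  have b: "z'\<^sup>2 + t'\<^sup>2 = (2*x^2+2*z^2+(q*q)*t^2+(q*q)*y^2 + 2*q*(t*(x-z)) - 2*q*(y*(x+z)))/4"
    unfolding Z T by (simp add: power2_eq_square field_simps)
  show ?thesis unfolding a b c1 c2 s2 using n by simp
qed

theorem theorem3p4:
  fixes g :: "real^4 \<Rightarrow> real^4 \<Rightarrow> real" and u :: "real^4"
  assumes g_bil: "bilinear g"
    and g_sym: "\<And>v w. g v w = g w v"
    and g_pos: "\<And>v. v \<noteq> 0 \<Longrightarrow> g v v > 0"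
    and g_S: "\<And>v w. g (S_op v) (S_op w) = g v w"
    and u_on: "\<And>i j. i < 4 \<Longrightarrow> j < 4 \<Longrightarrow>
                 g ((S_op ^^ i) u) ((S_op ^^ j) u) = (if i = j then 1 else 0)"
  shows "\<forall>k<4. isotropic g ((S_op ^^ k) u) \<and>
           (\<forall>x y z t x' y' z' t' :: real.
              (S_op ^^ k) u = x *\<^sub>R u + y *\<^sub>R S_op u + z *\<^sub>R (S_op ^^ 2) u + t *\<^sub>R (S_op ^^ 3) u
              \<and> x = (x' - y' + z' - t') / 2
              \<and> y = sqrt 2 / 2 * (- y' + t')
              \<and> z = - (x' + y' + z' + t') / 2
              \<and> t = sqrt 2 / 2 * (- x' + z')
              \<longrightarrow> x'\<^sup>2 + y'\<^sup>2 = 1/2 \<and> z'\<^sup>2 + t'\<^sup>2 = 1/2)"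
proof (intro allI impI conjI)
  fix k :: nat assume k: "k < 4"
  define v where "v i = (S_op ^^ i) u" for i
  have vS: "S_op (v i) = v (Suc i)" for i unfolding v_def by simp
  have orth: "g (v i) (v j) = (if i = j then 1 else 0)" if "i<4" "j<4" for i j
    using u_on that unfolding v_def by simp
  have gw: "g (v k) (S_op (v k)) = 0"
  proof (cases "k = 3")
    case True
    have "v 4 = S_op (v 3)" "v 3 = S_op (v 2)" using vS[of 3] vS[of 2] by (simp_all add: eval_nat_numeral)
    then have "g (v 3) (v 4) = g (S_op (v 2)) (S_op (v 3))" by simp
    also have "\<dots> = 0" using g_S orth[of 2 3] by simp
    finally show ?thesis using True vS by (simp add: eval_nat_numeral)
  next
    case False
    then show ?thesis using k orth[of k "Suc k"] vS by simp
  qed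
  show "isotropic g ((S_op ^^ k) u)"
    unfolding isotropic_def gtilde_def
  proof
    have "g (v k) (v k) = 1" using orth k by simp
    then show "(S_op ^^ k) u \<noteq> 0" unfolding v_def
      using g_bil bilinear_lzero by fastforce
    show "g ((S_op ^^ k) u) (S_op ((S_op ^^ k) u)) + g (S_op ((S_op ^^ k) u)) ((S_op ^^ k) u) = 0"
      using gw g_sym[of "S_op ((S_op ^^ k) u)" "(S_op ^^ k) u"] unfolding v_def by simp
  qed
  fix x y z t x' y' z' t' :: real
  assume H: "(S_op ^^ k) u = x *\<^sub>R u + y *\<^sub>R S_op u + z *\<^sub>R (S_op ^^ 2) u + t *\<^sub>R (S_op ^^ 3) u
              \<and> x = (x' - y' + z' - t') / 2
              \<and> y = sqrt 2 / 2 * (- y' + t')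
              \<and> z = - (x' + y' + z' + t') / 2
              \<and> t = sqrt 2 / 2 * (- x' + z')"
  have E: "v k = x *\<^sub>R v 0 + y *\<^sub>R v 1 + z *\<^sub>R v 2 + t *\<^sub>R v 3"
    using H unfolding v_def by simp
  have co: "g (v k) (v j) = x * g (v 0) (v j) + y * g (v 1) (v j) + z * g (v 2) (v j) + t * g (v 3) (v j)" for j
    unfolding E using g_bil by (simp add: bilinear_ladd bilinear_lmul)
  have cx: "x = (if k = 0 then 1 else 0)" using co[of 0] orth k by simp
  have cy: "y = (if k = 1 then 1 else 0)" using co[of 1] orth k by simp
  have cz: "z = (if k = 2 then 1 else 0)" using co[of 2] orth k by simp
  have ct: "t = (if k = 3 then 1 else 0)" using co[of 3] orth k by simp
  have n: "x^2+y^2+z^2+t^2 = 1" and c1: "t*(x-z) = 0" and c2: "y*(x+z) = 0"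
    using k unfolding cx cy cz ct by auto
  show "x'\<^sup>2 + y'\<^sup>2 = 1/2" "z'\<^sup>2 + t'\<^sup>2 = 1/2"
    using alg_part[OF n c1 c2] H by auto
qed

end
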